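(* Let $n\geq 1$ and $k\geq 1$ be integers with $k\not\equiv 1 \pmod 3$. Then $\gcd(C_{k,n},C_{k,n+1})=1$.
   Context: For an integer $k\geq 1$, the generalized balancing-Lucas numbers are defined by $C_{k,0}=1$, $C_{k,1}=3$ and $C_{k,n}=3kC_{k,n-1}+(1-k)C_{k,n-2}$ for $n\geq 2$. *)

theory Defs
  imports Main
begin

fun balLucas :: "int \<Rightarrow> nat \<Rightarrow> int" where
  "balLucas k 0 = 1"
| "balLucas k (Suc 0) = 3"
| "balLucas k (Suc (Suc n)) = 3 * k * balLucas k (Suc n) + (1 - k) * balLucas k n"

end

theory Submission
  imports Defs
begin

lemma bl_cong: "(k - 1) dvd (balLucas k m - 3 ^ m)"
proof (induction k m rule: balLucas.induct)
  case (3 k n)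
  have "balLucas k (Suc (Suc n)) - 3 ^ Suc (Suc n) =
        3 * (balLucas k (Suc n) - 3 ^ Suc n) + (k - 1) * (3 * balLucas k (Suc n) - balLucas k n)"
    by (simp add: algebra_simps)
  then show ?case using 3 by (metis dvd_add dvd_mult dvd_triv_left)
qed auto

lemma cop3:
  fixes k :: int
  assumes "k mod 3 \<noteq> 1"
  shows "coprime 3 (k - 1)"
proof -
  have r: "(k - 1) mod 3 = 1 \<or> (k - 1) mod 3 = 2" using assms by presburger
  have "gcd 3 (k - 1) = gcd 3 (((k - 1) div 3) * 3 + (k - 1) mod 3)"
    by simp
  also have "\<dots> = gcd 3 ((k - 1) mod 3)" by (rule gcd_add_mult)
  finally have "gcd 3 (k - 1) = gcd 3 ((k - 1) mod 3)" .
  then have "gcd 3 (k - 1) = 1" using r by auto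
  then show ?thesis by (simp add: coprime_iff_gcd_eq_1)
qed

lemma cop_bl:
  fixes k :: int
  assumes "k mod 3 \<noteq> 1"
  shows "coprime (balLucas k m) (k - 1)"
proof -
  obtain t where t: "balLucas k m - 3 ^ m = (k - 1) * t" using bl_cong by (metis dvdE)
  have "coprime (3 ^ m) (k - 1)" using cop3[OF assms] by simp
  moreover have "balLucas k m = 3 ^ m + t * (k - 1)" using t by (simp add: algebra_simps)
  moreover have "gcd (k - 1) (t * (k - 1) + 3 ^ m) = gcd (k - 1) (3 ^ m)" by (rule gcd_add_mult)
  ultimately show ?thesis
    by (metis add.commute coprime_commute coprime_iff_gcd_eq_1)
qed

lemma main_aux:
  fixes k :: int
  assumes "k mod 3 \<noteq> 1"
  shows "coprime (balLucas k n) (balLucas k (Suc n))"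
proof (induction n)
  case 0
  then show ?case by simp
next
  case (Suc n)
  have c1: "coprime (balLucas k (Suc n)) (1 - k)"
    using cop_bl[OF assms, of "Suc n"] by (metis coprime_minus_right_iff minus_diff_eq)
  have c2: "coprime (balLucas k (Suc n)) ((1 - k) * balLucas k n)"
    using c1 Suc.IH by (simp add: coprime_commute)
  have "balLucas k (Suc (Suc n)) = (1 - k) * balLucas k n + (3 * k) * balLucas k (Suc n)"
    by simp
  moreover have "gcd (balLucas k (Suc n)) ((3 * k) * balLucas k (Suc n) + (1 - k) * balLucas k n)
     = gcd (balLucas k (Suc n)) ((1 - k) * balLucas k n)" by (rule gcd_add_mult)
  ultimately show ?case using c2
    by (metis add.commute coprime_iff_gcd_eq_1)
qed

theorem mainTheorem12:
  fixes k :: int and n :: nat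
  assumes "n \<ge> 1" and "k \<ge> 1" and "k mod 3 \<noteq> 1"
  shows "gcd (balLucas k n) (balLucas k (Suc n)) = 1"
  using main_aux[OF assms(3)] by (simp add: coprime_iff_gcd_eq_1)

end
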